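(* Let $n \ge 2$ be an integer, let $1 \le \underline{x}_i < \bar{x}_i$ for $i \in \{1,2\}$, and let $\varepsilon \ge 2^{-2^{n-1}}$. Then for every $(x_1,x_2) \in [\underline{x}_1,\bar{x}_1] \times [\underline{x}_2,\bar{x}_2]$ there exists an $\varepsilon$-feasible point $y \in \mathbb{R}^{n+2}$ with $y_n = 0$ for the lower-level problem $$\max_{y \in \mathbb{R}^{n+2}} \; y_1 - y_n\,(x_1 + x_2 - y_{n+1} - y_{n+2})$$ subject to $y_1 + y_n = \tfrac12$, $y_i^2 \le y_{i+1}$ for $i \in \{1,\dots,n-1\}$, $y_i \ge 0$ for $i \in \{1,\dots,n\}$, $y_{n+1} \in [0,x_1]$, $y_{n+2} \in [-x_2,x_2]$.
   Context: For $\varepsilon>0$, a point is called $\varepsilon$-feasible for an optimization problem with constraints $g(y) \le 0$, $h(y)=0$ if all linear constraints are satisfied exactly and every nonlinear inequality constraint $g_i$ satisfies $g_i(y) \le \varepsilon$ and every nonlinear equality constraint $h_j$ satisfies $|h_j(y)| \le \varepsilon$. In the lower-level problem here, the only nonlinear constraints are $y_i^2 - y_{i+1} \le 0$, $i \in \{1,\dots,n-1\}$; all other constraints must hold exactly. *)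

theory Defs
  imports Complex_Main
begin

text \<open>Vectors y in R^(n+2) are represented as functions nat => real, using the
components y 1, ..., y (n+2); other values are irrelevant.\<close>

definition ll_objective :: "nat \<Rightarrow> real \<Rightarrow> real \<Rightarrow> (nat \<Rightarrow> real) \<Rightarrow> real" where
  "ll_objective n x1 x2 y = y 1 - y n * (x1 + x2 - y (n+1) - y (n+2))"

definition ll_linear_feasible :: "nat \<Rightarrow> real \<Rightarrow> real \<Rightarrow> (nat \<Rightarrow> real) \<Rightarrow> bool" where
  "ll_linear_feasible n x1 x2 y \<longleftrightarrow>
     y 1 + y n = 1/2 \<and>
     (\<forall>i\<in>{1..n}. y i \<ge> 0) \<and>
     0 \<le> y (n+1) \<and> y (n+1) \<le> x1 \<and>
     - x2 \<le> y (n+2) \<and> y (n+2) \<le> x2"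

definition ll_g :: "(nat \<Rightarrow> real) \<Rightarrow> nat \<Rightarrow> real" where
  "ll_g y i = (y i)^2 - y (i+1)"

definition ll_eps_feasible :: "real \<Rightarrow> nat \<Rightarrow> real \<Rightarrow> real \<Rightarrow> (nat \<Rightarrow> real) \<Rightarrow> bool" where
  "ll_eps_feasible \<epsilon> n x1 x2 y \<longleftrightarrow>
     ll_linear_feasible n x1 x2 y \<and> (\<forall>i\<in>{1..n-1}. ll_g y i \<le> \<epsilon>)"

end

theory Submission
  imports Defs
begin
lemma sq: "((1/2::real) ^ (2 ^ (i - 1)))^2 = (1/2) ^ (2 ^ i)" if i1: "i \<ge> 1" for i :: nat
proof -
  obtain k where k: "i = Suc k" using i1 by (cases i) auto
  have "((1/2::real) ^ (2 ^ k))^2 = (1/2) ^ (2 ^ k * 2)"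
    by (rule power_mult[symmetric])
  also have "(2::nat) ^ k * 2 = 2 ^ Suc k" by simp
  finally show ?thesis using k by simp
qed

theorem mainTheorem4:
  fixes n :: nat and xl1 xu1 xl2 xu2 \<epsilon> x1 x2 :: real
  assumes "n \<ge> 2"
    and "1 \<le> xl1" and "xl1 < xu1" and "1 \<le> xl2" and "xl2 < xu2"
    and "\<epsilon> \<ge> (1/2) ^ (2 ^ (n - 1))"
    and "x1 \<in> {xl1..xu1}" and "x2 \<in> {xl2..xu2}"
  shows "\<exists>y :: nat \<Rightarrow> real. ll_eps_feasible \<epsilon> n x1 x2 y \<and> y n = 0"
proof -
  define y :: "nat \<Rightarrow> real" where "y i = (if i < n then (1/2) ^ (2 ^ (i - 1)) else 0)" for i
  have y1: "y 1 = 1/2" using assms(1) by (simp add: y_def)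
  have yn: "y n = 0" "y (n+1) = 0" "y (n+2) = 0" by (simp_all add: y_def)
  have ynn: "\<forall>i\<in>{1..n}. y i \<ge> 0" by (simp add: y_def)
  have lin: "ll_linear_feasible n x1 x2 y"
    unfolding ll_linear_feasible_def using y1 yn ynn assms(2,4,7,8) by simp
  have e: "\<epsilon> \<ge> 0" using assms(6) zero_le_power[of "1/2::real" "2 ^ (n - 1)"] by linarith
  have g: "ll_g y i \<le> \<epsilon>" if ii: "i \<in> {1..n-1}" for i
  proof (cases "i + 1 < n")
    case True
    have "y i = (1/2) ^ (2 ^ (i - 1))" using True by (simp add: y_def)
    moreover have "y (i+1) = (1/2) ^ (2 ^ i)" using True by (simp add: y_def)
    ultimately have "ll_g y i = 0" using sq[of i] ii by (simp add: ll_g_def)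
    then show ?thesis using e by simp
  next
    case False
    then have i: "i = n - 1" using ii by auto
    have "y i = (1/2) ^ (2 ^ (i - 1))" using i assms(1) by (simp add: y_def)
    moreover have "y (i+1) = 0" using i assms(1) by (simp add: y_def)
    ultimately have "ll_g y i = (1/2) ^ (2 ^ (n - 1))" using sq[of i] ii i by (simp add: ll_g_def)
    then show ?thesis using assms(6) by simp
  qed
  show ?thesis
    by (rule exI[of _ y]) (use lin g yn in \<open>simp add: ll_eps_feasible_def\<close>)
qed
end
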